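(* Let $n\ge 0$ and $\mathbf{x}\in\mathbb{R}^{n+1}$ with $0\le\mathbf{x}_0<\mathbf{x}_1<\dots<\mathbf{x}_n\le 1$. Define the $(n+1)\times(n+1)$ matrices (indices $0\le i,j\le n$) $$H^n_{ij}=\binom{n+1}{i+j+1},\qquad \widetilde H^n_{ij}(\mathbf{x})=\sum_{k=0}^{i+j+1}(-1)^{n-k+1}\binom{n-k+1}{n-i-j}\sigma_{n-k+1}(\mathbf{x}),$$ $$T^n_{ij}=\binom{n+1}{j-i},\qquad \widetilde T^n_{ij}(\mathbf{x})=\sum_{k=0}^{j-i}(-1)^{n-k+1}\binom{n-k+1}{j-i-k}\sigma_{n-k+1}(\mathbf{x}),$$ $$D^n(\mathbf{x})=\mathrm{diag}\Big(\prod_{i\in\{0,\dots,n\}\setminus\{j\}}(\mathbf{x}_j-\mathbf{x}_i)\Big)_{j=0}^n,\qquad \Delta^n=\mathrm{diag}\Big(\binom{n}{j}\Big)_{j=0}^n,$$ and $\widetilde V^n_{ij}(\mathbf{x})=\mathbf{x}_i^j(1-\mathbf{x}_i)^{n-j}$. Then $$(V^n(\mathbf{x}))^{-1}=(\Delta^n)^{-1}\big[\widetilde H^n(\mathbf{x})T^n-H^n\widetilde T^n(\mathbf{x})\big](\widetilde V^n(\mathbf{x}))^T(D^n(\mathbf{x}))^{-1}.$$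
   Context: $V^n(\mathbf{x})$ is the Bernstein–Vandermonde matrix with entries $V^n_{ij}(\mathbf{x})=B^n_j(\mathbf{x}_i)$, where $B^n_j(x)=\binom{n}{j}x^j(1-x)^{n-j}$. $\sigma_k(\mathbf{x})$ is the $k$-th elementary symmetric function of $\mathbf{x}_0,\dots,\mathbf{x}_n$: $\sigma_0=1$ and $\sigma_k(\mathbf{x})=\sum_{0\le i_0<\dots<i_{k-1}\le n}\mathbf{x}_{i_0}\cdots\mathbf{x}_{i_{k-1}}$ for $1\le k\le n+1$. Conventions: $\binom{a}{b}=0$ if $b<0$ or $b>a$ (in particular $T^n,\widetilde T^n$ are upper triangular, and empty sums are $0$); $0^0=1$. *)

theory Defs
  imports Complex_Main "Jordan_Normal_Form.Matrix"
begin

definition binomZ :: "int \<Rightarrow> int \<Rightarrow> real" where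
  "binomZ a b = (if 0 \<le> b \<and> b \<le> a then real (nat a choose nat b) else 0)"

text \<open>k-th elementary symmetric function of x_0,...,x_n (integer index;
  value 0 for negative k, and automatically 0 for k > n+1, 1 for k = 0).\<close>
definition esym :: "(nat \<Rightarrow> real) \<Rightarrow> nat \<Rightarrow> int \<Rightarrow> real" where
  "esym x n k = (if k < 0 then 0 else
     (\<Sum>S\<in>{S. S \<subseteq> {0..n} \<and> card S = nat k}. \<Prod>i\<in>S. x i))"

text \<open>Bernstein-Vandermonde matrix V^n(x), entries B^n_j(x_i).\<close>
definition BV :: "nat \<Rightarrow> (nat \<Rightarrow> real) \<Rightarrow> real mat" where
  "BV n x = mat (n+1) (n+1) (\<lambda>(i,j). real (n choose j) * x i ^ j * (1 - x i) ^ (n - j))"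

definition BVtil :: "nat \<Rightarrow> (nat \<Rightarrow> real) \<Rightarrow> real mat" where
  "BVtil n x = mat (n+1) (n+1) (\<lambda>(i,j). x i ^ j * (1 - x i) ^ (n - j))"

definition Hmat :: "nat \<Rightarrow> real mat" where
  "Hmat n = mat (n+1) (n+1) (\<lambda>(i,j). binomZ (int n + 1) (int i + int j + 1))"

definition Htil :: "nat \<Rightarrow> (nat \<Rightarrow> real) \<Rightarrow> real mat" where
  "Htil n x = mat (n+1) (n+1) (\<lambda>(i,j).
     \<Sum>k\<in>{0..int i + int j + 1}. (-1::real) powi (int n - k + 1)
        * binomZ (int n - k + 1) (int n - int i - int j) * esym x n (int n - k + 1))"

definition Tmat :: "nat \<Rightarrow> real mat" where
  "Tmat n = mat (n+1) (n+1) (\<lambda>(i,j). binomZ (int n + 1) (int j - int i))"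

definition Ttil :: "nat \<Rightarrow> (nat \<Rightarrow> real) \<Rightarrow> real mat" where
  "Ttil n x = mat (n+1) (n+1) (\<lambda>(i,j).
     \<Sum>k\<in>{0..int j - int i}. (-1::real) powi (int n - k + 1)
        * binomZ (int n - k + 1) (int j - int i - k) * esym x n (int n - k + 1))"

text \<open>Inverses of the diagonal matrices D^n(x) and Delta^n (their diagonal
  entries are nonzero under the hypotheses).\<close>
definition Dinv :: "nat \<Rightarrow> (nat \<Rightarrow> real) \<Rightarrow> real mat" where
  "Dinv n x = mat_diag (n+1) (\<lambda>j. 1 / (\<Prod>i\<in>{0..n} - {j}. (x j - x i)))"

definition Deltainv :: "nat \<Rightarrow> real mat" where
  "Deltainv n = mat_diag (n+1) (\<lambda>j. 1 / real (n choose j))"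

end

theory Submission
  imports Defs "Jordan_Normal_Form.Determinant"
begin


definition Cf :: "nat \<Rightarrow> (int \<Rightarrow> real) \<Rightarrow> (int \<Rightarrow> real) \<Rightarrow> int \<Rightarrow> int \<Rightarrow> real" where
  "Cf n f g j m = (\<Sum>l<n+1. g (j + int l + 1) * f (m - int l) - f (j + int l + 1) * g (m - int l))"

lemma Cf_tele:
  "Cf n f g (a-1) b - Cf n f g a (b-1) =
    (g a * f b - f a * g b) - (g (a + int n + 1) * f (b - int n - 1) - f (a + int n + 1) * g (b - int n - 1))"
proof -
  define T where "T = (\<lambda>l::nat. g (a + int l) * f (b - int l) - f (a + int l) * g (b - int l))"
  have 1: "Cf n f g (a-1) b = (\<Sum>l<n+1. T l)" unfolding Cf_def T_def by (simp add: algebra_simps)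
  have 2: "Cf n f g a (b-1) = (\<Sum>l<n+1. T (Suc l))" unfolding Cf_def T_def by (simp add: algebra_simps)
  have "(\<Sum>l<n+1. T (Suc l)) - (\<Sum>l<n+1. T l) = T (n+1) - T 0"
    using sum_lessThan_telescope[of T "n+1"] by (simp only: sum_subtractf)
  hence "Cf n f g (a-1) b - Cf n f g a (b-1) = T 0 - T (n+1)" using 1 2 by simp
  thus ?thesis unfolding T_def by (simp add: algebra_simps)
qed

lemma refl0:
  "(\<Sum>l\<le>K. g (d + int l) * f (d + int K - int l) - f (d + int l) * g (d + int K - int l)) = (0::real)"
proof -
  have "(\<Sum>l\<le>K. g (d + int l) * f (d + int K - int l)) = (\<Sum>l\<in>{0..K}. g (d + int l) * f (d + int K - int l))"
    by (simp add: atMost_atLeast0)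
  also have "\<dots> = (\<Sum>l\<in>{0..K}. g (d + int (K + 0 - l)) * f (d + int K - int (K + 0 - l)))"
    by (rule sum.atLeastAtMost_rev)
  also have "\<dots> = (\<Sum>l\<in>{0..K}. f (d + int l) * g (d + int K - int l))"
    by (rule sum.cong) (auto simp: of_nat_diff algebra_simps)
  finally show ?thesis by (simp add: sum_subtractf atMost_atLeast0)
qed

definition "supp n (f::int\<Rightarrow>real) \<longleftrightarrow> (\<forall>c. (c < 0 \<or> c > int n + 1) \<longrightarrow> f c = 0)"

lemma suppD: "supp n f \<Longrightarrow> c < 0 \<or> c > int n + 1 \<Longrightarrow> f c = 0"
  unfolding supp_def by blast

lemma Cf_left:
  assumes f: "supp n f" and g: "supp n g" and m: "m \<le> n"
  shows "Cf n f g (-1) (int m) = 0"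
proof -
  define h where "h = (\<lambda>l::nat. g (0 + int l) * f (0 + int m - int l) - f (0 + int l) * g (0 + int m - int l))"
  have "Cf n f g (-1) (int m) = (\<Sum>l<n+1. h l)"
    unfolding Cf_def h_def by (intro sum.cong) simp_all
  also have "\<dots> = (\<Sum>l\<le>m. h l)"
  proof (rule sum.mono_neutral_right)
    show "\<forall>i\<in>{..<n + 1} - {..m}. h i = 0"
    proof
      fix i assume "i \<in> {..<n + 1} - {..m}"
      hence "int m - int i < 0" by auto
      thus "h i = 0" unfolding h_def using suppD[OF f] suppD[OF g] by simp
    qed
  qed (use m in auto)
  also have "\<dots> = 0" unfolding h_def by (rule refl0)
  finally show ?thesis .
qed

lemma Cf_top:
  assumes f: "supp n f" and g: "supp n g" and j: "j \<le> n"
  shows "Cf n f g (int j) (int n + 1) = 0"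
proof -
  define h where "h = (\<lambda>l::nat. g (int j + 1 + int l) * f (int j + 1 + int (n-j) - int l) - f (int j + 1 + int l) * g (int j + 1 + int (n-j) - int l))"
  have "Cf n f g (int j) (int n + 1) = (\<Sum>l<n+1. h l)"
    unfolding Cf_def h_def by (intro sum.cong) (use j in \<open>simp_all add: of_nat_diff algebra_simps\<close>)
  also have "\<dots> = (\<Sum>l\<le>n-j. h l)"
  proof (rule sum.mono_neutral_right)
    show "\<forall>i\<in>{..<n + 1} - {..n-j}. h i = 0"
    proof
      fix i assume "i \<in> {..<n + 1} - {..n-j}"
      hence "int j + 1 + int i > int n + 1" by auto
      thus "h i = 0" unfolding h_def using suppD[OF f] suppD[OF g] by simp
    qed
  qed (use j in auto)
  also have "\<dots> = 0" unfolding h_def by (rule refl0)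
  finally show ?thesis .
qed

lemma Cf_m1:
  assumes f: "supp n f" and g: "supp n g"
  shows "Cf n f g j (-1) = 0"
  unfolding Cf_def by (rule sum.neutral) (auto simp: suppD[OF f] suppD[OF g])

lemma Cf_np1:
  assumes f: "supp n f" and g: "supp n g" and j: "j = int n + 1"
  shows "Cf n f g j m = 0"
  unfolding Cf_def by (rule sum.neutral) (auto simp: j suppD[OF f] suppD[OF g])

lemma Cf_corner:
  assumes f: "supp n f" and g: "supp n g"
  shows "Cf n f g (-1) (int n + 1) = f (int n + 1) * g 0 - g (int n + 1) * f 0"
proof -
  define h where "h = (\<lambda>l::nat. g (0 + int l) * f (0 + int (Suc n) - int l) - f (0 + int l) * g (0 + int (Suc n) - int l))"
  have 0: "(\<Sum>l\<le>Suc n. h l) = 0" unfolding h_def by (rule refl0)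
  have 1: "(\<Sum>l\<le>Suc n. h l) = (\<Sum>l<n+1. h l) + h (Suc n)"
    by (simp only: sum.atMost_Suc lessThan_Suc_atMost Suc_eq_plus1[symmetric])
  have 2: "Cf n f g (-1) (int n + 1) = (\<Sum>l<n+1. h l)"
    unfolding Cf_def h_def by (intro sum.cong) (simp_all add: algebra_simps)
  have 3: "h (Suc n) = g (int n + 1) * f 0 - f (int n + 1) * g 0" unfolding h_def by (simp add: add.commute)
  show ?thesis using 0 1 2 3 by simp
qed

definition "Cz n f g j m = (if 0 \<le> j \<and> j \<le> int n \<and> 0 \<le> m \<and> m \<le> int n then Cf n f g j m else 0)"

lemma Cz_D:
  assumes f: "supp n f" and g: "supp n g" and a: "a \<le> n+1" and b: "b \<le> n+1"
  shows "Cz n f g (int a - 1) (int b) - Cz n f g (int a) (int b - 1) = g a * f b - f a * g b"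
proof -
  note tele = Cf_tele[of n f g "int a" "int b"]
  show ?thesis
  proof (cases "b \<le> n")
    case True
    have T: "g (int a + int n + 1) * f (int b - int n - 1) - f (int a + int n + 1) * g (int b - int n - 1) = 0"
      using True by (simp add: suppD[OF f] suppD[OF g])
    have c1: "Cz n f g (int a - 1) (int b) = Cf n f g (int a - 1) (int b)"
    proof (cases "a = 0")
      case True thus ?thesis using Cf_left[OF f g \<open>b \<le> n\<close>] by (simp add: Cz_def)
    qed (use \<open>b \<le> n\<close> a in \<open>auto simp: Cz_def\<close>)
    have c2: "Cz n f g (int a) (int b - 1) = Cf n f g (int a) (int b - 1)"
    proof (cases "b = 0")
      case True thus ?thesis using Cf_m1[OF f g] by (simp add: Cz_def)
    next
      case False
      show ?thesis
      proof (cases "a = n+1")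
        case True thus ?thesis using Cf_np1[OF f g, of "int a" "int b - 1"] by (simp add: Cz_def)
      qed (use \<open>b \<le> n\<close> a False in \<open>auto simp: Cz_def\<close>)
    qed
    show ?thesis using tele T c1 c2 by simp
  next
    case False
    hence bn: "b = n+1" using b by simp
    show ?thesis
    proof (cases "a = 0")
      case True
      have "Cz n f g (int a) (int b - 1) = Cf n f g 0 (int n)" using True bn by (simp add: Cz_def)
      moreover have "Cz n f g (int a - 1) (int b) = 0" using True by (simp add: Cz_def)
      moreover have "Cf n f g (-1) (int n + 1) = f (int n + 1) * g 0 - g (int n + 1) * f 0"
        by (rule Cf_corner[OF f g])
      ultimately show ?thesis using tele True bn by (simp add: algebra_simps)
    next
      case False
      have T: "g (int a + int n + 1) * f (int b - int n - 1) - f (int a + int n + 1) * g (int b - int n - 1) = 0"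
        using False by (simp add: suppD[OF f] suppD[OF g])
      have c1: "Cf n f g (int a - 1) (int b) = 0"
        using Cf_top[OF f g, of "a-1"] False a bn by (simp add: of_nat_diff add.commute)
      have c1': "Cz n f g (int a - 1) (int b) = 0" using bn by (simp add: Cz_def)
      have c2: "Cz n f g (int a) (int b - 1) = Cf n f g (int a) (int b - 1)"
      proof (cases "a = n+1")
        case True thus ?thesis using Cf_np1[OF f g, of "int a" "int b - 1"] by (simp add: Cz_def)
      qed (use bn a False in \<open>auto simp: Cz_def\<close>)
      show ?thesis using tele T c1 c1' c2 by simp
    qed
  qed
qed


definition "Yb n (s::real) a = s ^ a * (1 - s) ^ (n + 1 - a)"

lemma S1:
  "(\<Sum>j<n+1. \<Sum>m<n+1. Cf n f g (int j) (int m) * (Yb n s (Suc j) * Yb n t m))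
   = (\<Sum>a<n+2. \<Sum>b<n+2. Cz n f g (int a - 1) (int b) * (Yb n s a * Yb n t b))"
proof -
  have "(\<Sum>a<Suc (Suc n). \<Sum>b<Suc (Suc n). Cz n f g (int a - 1) (int b) * (Yb n s a * Yb n t b))
     = (\<Sum>a<Suc n. \<Sum>b<Suc (Suc n). Cz n f g (int (Suc a) - 1) (int b) * (Yb n s (Suc a) * Yb n t b))"
    by (subst sum.lessThan_Suc_shift) (simp add: Cz_def)
  also have "\<dots> = (\<Sum>a<Suc n. \<Sum>b<Suc n. Cz n f g (int a) (int b) * (Yb n s (Suc a) * Yb n t b))"
    by (simp add: Cz_def)
  also have "\<dots> = (\<Sum>j<n+1. \<Sum>m<n+1. Cf n f g (int j) (int m) * (Yb n s (Suc j) * Yb n t m))"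
    by (intro sum.cong) (auto simp: Cz_def)
  finally show ?thesis by simp
qed

lemma S2:
  "(\<Sum>j<n+1. \<Sum>m<n+1. Cf n f g (int j) (int m) * (Yb n s j * Yb n t (Suc m)))
   = (\<Sum>a<n+2. \<Sum>b<n+2. Cz n f g (int a) (int b - 1) * (Yb n s a * Yb n t b))"
proof -
  have "(\<Sum>a<Suc (Suc n). \<Sum>b<Suc (Suc n). Cz n f g (int a) (int b - 1) * (Yb n s a * Yb n t b))
     = (\<Sum>a<Suc (Suc n). \<Sum>b<Suc n. Cz n f g (int a) (int (Suc b) - 1) * (Yb n s a * Yb n t (Suc b)))"
    by (rule sum.cong[OF refl], subst sum.lessThan_Suc_shift, simp add: Cz_def)
  also have "\<dots> = (\<Sum>a<Suc n. \<Sum>b<Suc n. Cz n f g (int a) (int b) * (Yb n s a * Yb n t (Suc b)))"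
    by (simp add: Cz_def)
  also have "\<dots> = (\<Sum>j<n+1. \<Sum>m<n+1. Cf n f g (int j) (int m) * (Yb n s j * Yb n t (Suc m)))"
    by (intro sum.cong) (auto simp: Cz_def)
  finally show ?thesis by simp
qed

lemma Yb_step:
  fixes s t :: real
  assumes "j \<le> n" "m \<le> n"
  shows "(s - t) * ((s^j*(1-s)^(n-j)) * (t^m*(1-t)^(n-m))) = Yb n s (Suc j) * Yb n t m - Yb n s j * Yb n t (Suc m)"
proof -
  have a: "n + 1 - j = Suc (n - j)" "n + 1 - m = Suc (n - m)" "n + 1 - Suc j = n - j" "n + 1 - Suc m = n - m"
    using assms by auto
  have e: "s*(1-t) - (1-s)*t = s - t" by (simp add: algebra_simps)
  show ?thesis unfolding Yb_def a power_Suc e[symmetric] by (simp only: algebra_simps)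
qed

lemma Bez:
  assumes f: "supp n f" and g: "supp n g"
  shows "(s - t) * (\<Sum>j<n+1. \<Sum>m<n+1. Cf n f g (int j) (int m) * ((s^j*(1-s)^(n-j)) * (t^m*(1-t)^(n-m))))
     = (\<Sum>a<n+2. g (int a) * Yb n s a) * (\<Sum>b<n+2. f (int b) * Yb n t b)
       - (\<Sum>b<n+2. g (int b) * Yb n t b) * (\<Sum>a<n+2. f (int a) * Yb n s a)"
proof -
  have "(s - t) * (\<Sum>j<n+1. \<Sum>m<n+1. Cf n f g (int j) (int m) * ((s^j*(1-s)^(n-j)) * (t^m*(1-t)^(n-m))))
      = (\<Sum>j<n+1. \<Sum>m<n+1. Cf n f g (int j) (int m) * (Yb n s (Suc j) * Yb n t m - Yb n s j * Yb n t (Suc m)))"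
    unfolding sum_distrib_left
  proof (intro sum.cong refl)
    fix j m assume "j \<in> {..<n+1}" "m \<in> {..<n+1}"
    then have "j \<le> n" "m \<le> n" by auto
    from Yb_step[OF this, of s t]
    show "(s - t) * (Cf n f g (int j) (int m) * (s ^ j * (1 - s) ^ (n - j) * (t ^ m * (1 - t) ^ (n - m)))) =
         Cf n f g (int j) (int m) * (Yb n s (Suc j) * Yb n t m - Yb n s j * Yb n t (Suc m))"
      by (metis mult.left_commute)
  qed
  also have "\<dots> = (\<Sum>j<n+1. \<Sum>m<n+1. Cf n f g (int j) (int m) * (Yb n s (Suc j) * Yb n t m))
      - (\<Sum>j<n+1. \<Sum>m<n+1. Cf n f g (int j) (int m) * (Yb n s j * Yb n t (Suc m)))"
    by (simp add: sum_subtractf right_diff_distrib)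
  also have "\<dots> = (\<Sum>a<n+2. \<Sum>b<n+2. (Cz n f g (int a - 1) (int b) - Cz n f g (int a) (int b - 1)) * (Yb n s a * Yb n t b))"
    unfolding S1 S2 by (simp add: sum_subtractf left_diff_distrib)
  also have "\<dots> = (\<Sum>a<n+2. \<Sum>b<n+2. (g a * f b - f a * g b) * (Yb n s a * Yb n t b))"
    by (intro sum.cong refl) (simp add: Cz_D[OF f g])
  also have "\<dots> = (\<Sum>a<n+2. g (int a) * Yb n s a) * (\<Sum>b<n+2. f (int b) * Yb n t b)
       - (\<Sum>b<n+2. g (int b) * Yb n t b) * (\<Sum>a<n+2. f (int a) * Yb n s a)"
  proof -
    have 1: "(\<Sum>a<n+2. \<Sum>b<n+2. (g a * f b - f a * g b) * (Yb n s a * Yb n t b))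
       = (\<Sum>a<n+2. \<Sum>b<n+2. (g a * Yb n s a) * (f b * Yb n t b)) - (\<Sum>a<n+2. \<Sum>b<n+2. (f a * Yb n s a) * (g b * Yb n t b))"
      by (simp only: sum_subtractf[symmetric], intro sum.cong refl, simp add: algebra_simps)
    have 2: "(\<Sum>a<n+2. \<Sum>b<n+2. (f a * Yb n s a) * (g b * Yb n t b)) = (\<Sum>b<n+2. g (int b) * Yb n t b) * (\<Sum>a<n+2. f (int a) * Yb n s a)"
    proof -
      have "(\<Sum>b<n+2. g (int b) * Yb n t b) * (\<Sum>a<n+2. f (int a) * Yb n s a)
         = (\<Sum>b<n+2. \<Sum>a<n+2. (g b * Yb n t b) * (f a * Yb n s a))" by (rule sum_product)
      also have "\<dots> = (\<Sum>a<n+2. \<Sum>b<n+2. (g b * Yb n t b) * (f a * Yb n s a))" by (rule sum.swap)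
      also have "\<dots> = (\<Sum>a<n+2. \<Sum>b<n+2. (f a * Yb n s a) * (g b * Yb n t b))"
        by (intro sum.cong refl) (rule mult.commute)
      finally show ?thesis by simp
    qed
    show ?thesis unfolding 1 2 sum_product ..
  qed
  finally show ?thesis .
qed



definition "ff n c = binomZ (int n + 1) c"
definition "aa x n k = (-1::real) powi (int n - k + 1) * esym x n (int n - k + 1)"
definition "gg x n c = (\<Sum>k\<in>{0..c}. aa x n k * binomZ (int n - k + 1) (c - k))"

lemma supp_ff: "supp n (ff n)"
  unfolding supp_def ff_def binomZ_def by auto

lemma supp_gg: "supp n (gg x n)"
  unfolding supp_def gg_def
proof (intro allI impI)
  fix c :: int assume "c < 0 \<or> int n + 1 < c"
  thus "(\<Sum>k\<in>{0..c}. aa x n k * binomZ (int n - k + 1) (c - k)) = 0"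
    by (auto intro!: sum.neutral simp: binomZ_def)
qed

lemma F_eq: "(\<Sum>a<n+2. ff n (int a) * Yb n s a) = 1"
proof -
  have "(\<Sum>a<n+2. ff n (int a) * Yb n s a) = (\<Sum>a\<le>n+1. of_nat ((n+1) choose a) * s^a * (1-s)^(n+1-a))"
    by (intro sum.cong) (auto simp: ff_def binomZ_def Yb_def nat_add_distrib)
  also have "\<dots> = (s + (1 - s)) ^ (n+1)" by (rule binomial_ring[symmetric])
  finally show ?thesis by simp
qed

lemma gg_nat:
  assumes "a \<le> n + 1"
  shows "gg x n (int a) = (\<Sum>k\<le>a. aa x n (int k) * real ((n+1-k) choose (a-k)))"
proof -
  have "{0..int a} = int ` {..a}" by (auto simp: image_iff intro!: bexI[of _ "nat _"])
  hence "gg x n (int a) = (\<Sum>k\<le>a. aa x n (int k) * binomZ (int n - int k + 1) (int a - int k))"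
    unfolding gg_def by (simp add: sum.reindex)
  also have "\<dots> = (\<Sum>k\<le>a. aa x n (int k) * real ((n+1-k) choose (a-k)))"
  proof (intro sum.cong refl)
    fix k assume "k \<in> {..a}"
    hence k: "k \<le> a" by simp
    have e1: "nat (int n - int k + 1) = n + 1 - k" using k assms by auto
    have e2: "nat (int a - int k) = a - k" using k by auto
    show "aa x n (int k) * binomZ (int n - int k + 1) (int a - int k) = aa x n (int k) * real ((n+1-k) choose (a-k))"
      unfolding binomZ_def e1 e2 using k assms by auto
  qed
  finally show ?thesis .
qed


lemma G_eq: "(\<Sum>a<n+2. gg x n (int a) * Yb n s a) = (\<Sum>k\<le>n+1. aa x n (int k) * s^k)"
proof -
  define N where "N = n + 1"
  define h where "h = (\<lambda>k l. aa x n (int k) * real ((N-k) choose l) * s^(k+l) * (1-s)^(N-k-l))"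
  have "(\<Sum>a<n+2. gg x n (int a) * Yb n s a) = (\<Sum>a\<le>N. \<Sum>k\<le>a. h k (a - k))"
  proof -
    have "{..<n+2} = {..N}" unfolding N_def by auto
    moreover have "gg x n (int a) * Yb n s a = (\<Sum>k\<le>a. h k (a - k))" if "a \<le> N" for a
    proof -
      have "gg x n (int a) * Yb n s a = (\<Sum>k\<le>a. aa x n (int k) * real ((n+1-k) choose (a-k)) * (s ^ a * (1 - s) ^ (n + 1 - a)))"
        using that unfolding N_def by (simp add: gg_nat Yb_def sum_distrib_right)
      also have "\<dots> = (\<Sum>k\<le>a. h k (a - k))"
        by (intro sum.cong refl) (use that in \<open>auto simp: h_def N_def\<close>)
      finally show ?thesis .
    qed
    ultimately show ?thesis by simp
  qed
  also have "\<dots> = (\<Sum>(k,l)\<in>{(i,j). i+j \<le> N}. h k l)"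
    by (rule sum.triangle_reindex_eq[symmetric])
  also have "{(i,j). i+j \<le> N} = Sigma {..N} (\<lambda>k. {..N-k})" by auto
  also have "(\<Sum>(k,l)\<in>Sigma {..N} (\<lambda>k. {..N-k}). h k l) = (\<Sum>k\<le>N. \<Sum>l\<le>N-k. h k l)"
    by (rule sum.Sigma[symmetric]) auto
  also have "\<dots> = (\<Sum>k\<le>N. aa x n (int k) * s^k)"
  proof (intro sum.cong refl)
    fix k assume "k \<in> {..N}"
    have "(\<Sum>l\<le>N-k. h k l) = aa x n (int k) * s^k * (\<Sum>l\<le>N-k. of_nat ((N-k) choose l) * s^l * (1-s)^(N-k-l))"
      unfolding h_def sum_distrib_left by (intro sum.cong refl) (simp add: power_add algebra_simps)
    also have "(\<Sum>l\<le>N-k. of_nat ((N-k) choose l) * s^l * (1-s)^(N-k-l)) = (s + (1-s))^(N-k)"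
      by (rule binomial_ring[symmetric])
    finally show "(\<Sum>l\<le>N-k. h k l) = aa x n (int k) * s^k" by simp
  qed
  finally show ?thesis unfolding N_def .
qed

lemma vieta:
  "(\<Prod>i\<in>{0..n}. (s - x i)) = (\<Sum>k\<le>n+1. aa x n (int k) * s^k)"
proof -
  define A where "A = {0..n}"
  have cA: "card A = n + 1" unfolding A_def by simp
  have "(\<Prod>i\<in>A. (s - x i)) = (\<Prod>i\<in>A. (- x i) + s)" by simp
  also have "\<dots> = (\<Sum>X\<in>Pow A. (\<Prod>i\<in>X. - x i) * (\<Prod>i\<in>A-X. s))"
    by (rule prod_add) (simp add: A_def)
  also have "\<dots> = (\<Sum>X\<in>Pow A. (-1)^card X * (\<Prod>i\<in>X. x i) * s^(n + 1 - card X))"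
  proof (intro sum.cong refl)
    fix X assume "X \<in> Pow A"
    hence "X \<subseteq> A" "finite X" by (auto simp: A_def intro: finite_subset)
    thus "(\<Prod>i\<in>X. - x i) * (\<Prod>i\<in>A-X. s) = (-1)^card X * (\<Prod>i\<in>X. x i) * s^(n + 1 - card X)"
      using cA by (simp add: prod_uminus card_Diff_subset A_def)
  qed
  also have "\<dots> = (\<Sum>c\<le>n+1. \<Sum>X\<in>{X\<in>Pow A. card X = c}. (-1)^card X * (\<Prod>i\<in>X. x i) * s^(n + 1 - card X))"
    by (rule sum.group[symmetric]) (auto simp: A_def intro: card_mono[where B="{0..n}", simplified])
  also have "\<dots> = (\<Sum>c\<le>n+1. (-1)^c * esym x n (int c) * s^(n+1-c))"
  proof (intro sum.cong refl)
    fix c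
    have "{X\<in>Pow A. card X = c} = {S. S \<subseteq> {0..n} \<and> card S = nat (int c)}" by (auto simp: A_def)
    thus "(\<Sum>X\<in>{X\<in>Pow A. card X = c}. (-1)^card X * (\<Prod>i\<in>X. x i) * s^(n + 1 - card X)) = (-1)^c * esym x n (int c) * s^(n+1-c)"
      by (simp add: esym_def sum_distrib_left sum_distrib_right)
  qed
  also have "\<dots> = (\<Sum>k\<le>n+1. aa x n (int k) * s^k)"
  proof -
    have "(\<Sum>c\<le>n+1. (-1)^c * esym x n (int c) * s^(n+1-c)) = (\<Sum>c\<in>{0..n+1}. (-1)^c * esym x n (int c) * s^(n+1-c))"
      by (simp add: atMost_atLeast0)
    also have "\<dots> = (\<Sum>k\<in>{0..n+1}. (-1)^(n+1+0-k) * esym x n (int (n+1+0-k)) * s^(n+1-(n+1+0-k)))"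
      by (rule sum.atLeastAtMost_rev)
    also have "\<dots> = (\<Sum>k\<in>{0..n+1}. aa x n (int k) * s^k)"
    proof (intro sum.cong refl)
      fix k assume "k \<in> {0..n+1}"
      hence k: "k \<le> n+1" by simp
      hence e: "int n - int k + 1 = int (n+1-k)" by auto
      show "(-1)^(n+1+0-k) * esym x n (int (n+1+0-k)) * s^(n+1-(n+1+0-k)) = aa x n (int k) * s^k"
        unfolding aa_def e power_int_of_nat using k by simp
    qed
    finally show ?thesis by (simp add: atMost_atLeast0)
  qed
  finally show ?thesis unfolding A_def .
qed



lemma binomZ_sym: "binomZ A B = binomZ A (A - B)"
proof (cases "0 \<le> B \<and> B \<le> A")
  case True
  hence "nat (A - B) = nat A - nat B" "nat B \<le> nat A" by auto
  thus ?thesis using True unfolding binomZ_def by (simp add: binomial_symmetric[symmetric])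
next
  case False thus ?thesis unfolding binomZ_def by auto
qed

lemma Htil_entry:
  assumes "j < n+1" "l < n+1"
  shows "Htil n x $$ (j,l) = gg x n (int j + int l + 1)"
proof -
  have "Htil n x $$ (j,l) = (\<Sum>k\<in>{0..int j + int l + 1}. (-1::real) powi (int n - k + 1)
        * binomZ (int n - k + 1) (int n - int j - int l) * esym x n (int n - k + 1))"
    using assms unfolding Htil_def by simp
  also have "\<dots> = gg x n (int j + int l + 1)"
    unfolding gg_def aa_def
    by (intro sum.cong refl) (subst binomZ_sym, simp add: algebra_simps)
  finally show ?thesis .
qed

lemma Ttil_entry:
  assumes "j < n+1" "l < n+1"
  shows "Ttil n x $$ (j,l) = gg x n (int l - int j)"
  using assms unfolding Ttil_def gg_def aa_def by (simp add: algebra_simps)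

lemma Cm_entry:
  assumes "j < n+1" "m < n+1"
  shows "(Htil n x * Tmat n - Hmat n * Ttil n x) $$ (j,m) = Cf n (ff n) (gg x n) (int j) (int m)"
proof -
  have dims: "dim_row (Htil n x) = n+1" "dim_col (Htil n x) = n+1" "dim_row (Tmat n) = n+1" "dim_col (Tmat n) = n+1"
    "dim_row (Hmat n) = n+1" "dim_col (Hmat n) = n+1" "dim_row (Ttil n x) = n+1" "dim_col (Ttil n x) = n+1"
    by (auto simp: Htil_def Tmat_def Hmat_def Ttil_def)
  have T: "Tmat n $$ (l,m) = ff n (int m - int l)" if "l < n+1" for l
    using that assms unfolding Tmat_def ff_def by simp
  have H: "Hmat n $$ (j,l) = ff n (int j + int l + 1)" if "l < n+1" for l
    using that assms unfolding Hmat_def ff_def by simp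
  have 1: "(Htil n x * Tmat n) $$ (j,m) = (\<Sum>l<n+1. gg x n (int j + int l + 1) * ff n (int m - int l))"
    using assms dims by (auto simp: scalar_prod_def Htil_entry T atLeast0LessThan intro!: sum.cong)
  have 2: "(Hmat n * Ttil n x) $$ (j,m) = (\<Sum>l<n+1. ff n (int j + int l + 1) * gg x n (int m - int l))"
    using assms dims by (auto simp: scalar_prod_def Ttil_entry H atLeast0LessThan intro!: sum.cong)
  have "(Htil n x * Tmat n - Hmat n * Ttil n x) $$ (j,m) = (Htil n x * Tmat n) $$ (j,m) - (Hmat n * Ttil n x) $$ (j,m)"
    using assms dims by simp
  thus ?thesis unfolding 1 2 Cf_def by (simp add: sum_subtractf)
qed



definition "Qf n x s t = (\<Sum>j<n+1. \<Sum>m<n+1. Cf n (ff n) (gg x n) (int j) (int m) * ((s^j*(1-s)^(n-j)) * (t^m*(1-t)^(n-m))))"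

lemma Q_omega: "(s - t) * Qf n x s t = (\<Prod>i\<in>{0..n}. (s - x i)) - (\<Prod>i\<in>{0..n}. (t - x i))"
  unfolding Qf_def Bez[OF supp_ff supp_gg] F_eq G_eq vieta by simp

lemma eq_at_by_cont:
  fixes f g :: "real \<Rightarrow> real"
  assumes "isCont f a" "isCont g a" "\<And>s. s \<noteq> a \<Longrightarrow> f s = g s"
  shows "f a = g a"
proof -
  have "(g \<longlongrightarrow> g a) (at a)" using assms(2) isCont_def by blast
  moreover have "eventually (\<lambda>s. f s = g s) (at a)"
    by (simp add: eventually_at_filter assms(3))
  ultimately have "(f \<longlongrightarrow> g a) (at a)" using tendsto_cong by (metis (mono_tags, lifting))
  moreover have "(f \<longlongrightarrow> f a) (at a)" using assms(1) isCont_def by blast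
  ultimately show ?thesis using LIM_unique by blast
qed

lemma Q_off:
  assumes "i \<le> n" "l \<le> n" "x i \<noteq> x l"
  shows "Qf n x (x i) (x l) = 0"
proof -
  have z: "(\<Prod>r\<in>{0..n}. (x i - x r)) = 0" "(\<Prod>r\<in>{0..n}. (x l - x r)) = 0"
    using assms by (auto intro!: prod_zero)
  have "(x i - x l) * Qf n x (x i) (x l) = 0" using Q_omega[of "x i" "x l" n x] z by simp
  thus ?thesis using assms by simp
qed

lemma Q_diag:
  assumes "l \<le> n"
  shows "Qf n x (x l) (x l) = (\<Prod>i\<in>{0..n} - {l}. (x l - x i))"
proof -
  let ?P = "\<lambda>s. \<Prod>i\<in>{0..n} - {l}. (s - x i)"
  have "Qf n x s (x l) = ?P s" if "s \<noteq> x l" for s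
  proof -
    have "(\<Prod>r\<in>{0..n}. (s - x r)) = (s - x l) * ?P s" using assms by (simp add: prod.remove)
    moreover have "(\<Prod>r\<in>{0..n}. (x l - x r)) = 0" using assms by (auto intro!: prod_zero)
    ultimately have "(s - x l) * Qf n x s (x l) = (s - x l) * ?P s" using Q_omega[of s "x l" n x] by simp
    thus ?thesis using that by simp
  qed
  moreover have "isCont (\<lambda>s. Qf n x s (x l)) a" for a unfolding Qf_def by (intro continuous_intros)
  moreover have "isCont ?P a" for a by (intro continuous_intros)
  ultimately show ?thesis using eq_at_by_cont[where f="\<lambda>s. Qf n x s (x l)" and g="?P" and a="x l"] by blast
qed



lemma strict_nodes:
  assumes "\<forall>i<n. x i < x (Suc i)"
  shows "i < l \<Longrightarrow> l \<le> n \<Longrightarrow> (x i :: real) < x l"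
proof (induction l)
  case 0 thus ?case by simp
next
  case (Suc l)
  show ?case
  proof (cases "i = l")
    case True thus ?thesis using assms Suc.prems by auto
  next
    case False
    hence "x i < x l" using Suc by auto
    also have "x l < x (Suc l)" using assms Suc.prems by auto
    finally show ?thesis .
  qed
qed

lemma distinct_nodes:
  assumes "\<forall>i<n. x i < x (Suc i)" "i \<le> n" "l \<le> n" "i \<noteq> l"
  shows "(x i :: real) \<noteq> x l"
proof (cases "i < l")
  case True thus ?thesis using strict_nodes[OF assms(1) True assms(3)] by simp
next
  case False hence "l < i" using assms by simp
  thus ?thesis using strict_nodes[OF assms(1) _ assms(2)] by force
qed

theorem theorem2p7:
  fixes n :: nat and x :: "nat \<Rightarrow> real"
  assumes "0 \<le> x 0" and "\<forall>i<n. x i < x (Suc i)" and "x n \<le> 1"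
  shows "inverts_mat (BV n x)
           (Deltainv n * (Htil n x * Tmat n - Hmat n * Ttil n x) * transpose_mat (BVtil n x) * Dinv n x)
       \<and> inverts_mat
           (Deltainv n * (Htil n x * Tmat n - Hmat n * Ttil n x) * transpose_mat (BVtil n x) * Dinv n x)
           (BV n x)"
proof -
  define N where "N = n + 1"
  define Cm where "Cm = Htil n x * Tmat n - Hmat n * Ttil n x"
  define M where "M = Deltainv n * Cm * transpose_mat (BVtil n x) * Dinv n x"
  define dl where "dl = (\<lambda>l. 1 / (\<Prod>i\<in>{0..n} - {l}. (x l - x i)))"
  have Cmc: "Cm \<in> carrier_mat N N" unfolding Cm_def N_def
    by (auto simp: Htil_def Tmat_def Hmat_def Ttil_def)
  have DC: "Deltainv n * Cm = mat N N (\<lambda>(p,m). 1 / real (n choose p) * Cm $$ (p,m))"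
    unfolding Deltainv_def N_def by (rule mat_diag_mult_left) (use Cmc N_def in simp)
  have VT: "(Deltainv n * Cm) * transpose_mat (BVtil n x)
      = mat N N (\<lambda>(p,l). \<Sum>m<N. (1 / real (n choose p) * Cm $$ (p,m)) * (x l ^ m * (1 - x l) ^ (n - m)))"
    by (rule eq_matI) (auto simp: DC BVtil_def N_def scalar_prod_def atLeast0LessThan intro!: sum.cong)
  have Mf: "M = mat N N (\<lambda>(p,l). (\<Sum>m<N. (1 / real (n choose p) * Cm $$ (p,m)) * (x l ^ m * (1 - x l) ^ (n - m))) * dl l)"
    unfolding M_def VT Dinv_def dl_def N_def
    by (subst mat_diag_mult_right[of _ "n+1"]) (auto intro!: eq_matI)
  have BVc: "BV n x \<in> carrier_mat N N" unfolding BV_def N_def by simp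
  have Mc: "M \<in> carrier_mat N N" unfolding Mf by simp
  have entry: "(BV n x * M) $$ (i,l) = dl l * Qf n x (x i) (x l)" if "i < N" "l < N" for i l
  proof -
    have "(BV n x * M) $$ (i,l) = (\<Sum>p<N. (real (n choose p) * x i ^ p * (1 - x i) ^ (n - p)) *
       ((\<Sum>m<N. (1 / real (n choose p) * Cm $$ (p,m)) * (x l ^ m * (1 - x l) ^ (n - m))) * dl l))"
      using that BVc Mc by (auto simp: Mf BV_def scalar_prod_def atLeast0LessThan N_def intro!: sum.cong)
    also have "\<dots> = dl l * Qf n x (x i) (x l)"
      unfolding Qf_def sum_distrib_left N_def
    proof (intro sum.cong refl)
      fix p assume p: "p \<in> {..<n+1}"
      have nz: "real (n choose p) \<noteq> 0" using p by simp
      show "real (n choose p) * x i ^ p * (1 - x i) ^ (n - p) *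
        ((\<Sum>m<n+1. 1 / real (n choose p) * Cm $$ (p, m) * (x l ^ m * (1 - x l) ^ (n - m))) * dl l) =
        (\<Sum>m<n + 1. dl l * (Cf n (ff n) (gg x n) (int p) (int m) *
            (x i ^ p * (1 - x i) ^ (n - p) * (x l ^ m * (1 - x l) ^ (n - m)))))"
        unfolding sum_distrib_left sum_distrib_right N_def
      proof (intro sum.cong refl)
        fix m assume m: "m \<in> {..<n+1}"
        have "Cm $$ (p,m) = Cf n (ff n) (gg x n) (int p) (int m)"
          unfolding Cm_def using p m by (simp add: Cm_entry)
        thus "real (n choose p) * x i ^ p * (1 - x i) ^ (n - p) *
          (1 / real (n choose p) * Cm $$ (p, m) * (x l ^ m * (1 - x l) ^ (n - m)) * dl l) =
          dl l * (Cf n (ff n) (gg x n) (int p) (int m) *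
            (x i ^ p * (1 - x i) ^ (n - p) * (x l ^ m * (1 - x l) ^ (n - m))))"
          using nz by (simp add: field_simps)
      qed
    qed
    finally show ?thesis .
  qed
  have one: "BV n x * M = 1\<^sub>m N"
  proof (rule eq_matI)
    fix i l assume il: "i < dim_row (1\<^sub>m N :: real mat)" "l < dim_col (1\<^sub>m N :: real mat)"
    hence il': "i < N" "l < N" by auto
    show "(BV n x * M) $$ (i,l) = 1\<^sub>m N $$ (i,l)"
    proof (cases "i = l")
      case True
      have "(\<Prod>r\<in>{0..n} - {l}. (x l - x r)) \<noteq> 0"
        using distinct_nodes[OF assms(2)] il' by (auto simp: N_def)
      thus ?thesis using True il' entry[OF il'] Q_diag[of l n x] by (simp add: dl_def N_def)
    next
      case False
      have "x i \<noteq> x l" using distinct_nodes[OF assms(2)] il' False by (auto simp: N_def)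
      thus ?thesis using False il' entry[OF il'] Q_off[of i n l x] by (simp add: N_def)
    qed
  qed (use BVc Mc in auto)
  have two: "M * BV n x = 1\<^sub>m N" by (rule mat_mult_left_right_inverse[OF BVc Mc one])
  have "inverts_mat (BV n x) M \<and> inverts_mat M (BV n x)"
    using one two BVc Mc unfolding inverts_mat_def by auto
  thus ?thesis unfolding M_def Cm_def .
qed


end
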